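(* There is a function $C_4(t,\epsilon)$ such that the following holds for every positive integer $t$ and every $\epsilon\in(0,1)$: let $G$ be a bipartite graph with $\delta(G)\geq C_4(t,\epsilon)$ which is induced $S_{t,t}$-free. Then for every path $x_1x_2x_3x_4x_5x_6$ of length $5$ in $G$ we have $|S_{N(x_1)}^{N(x_6)}(\epsilon)|\leq C_4(t,\epsilon)$.
   Context: For positive integers $a,b$, the biclaw $S_{a,b}$ is the graph with vertex set $\{x,x_1,\dots,x_a,y,y_1,\dots,y_b\}$ and edges $xy$, $xy_1,\dots,xy_b$, $yx_1,\dots,yx_a$. Induced $S_{t,t}$-free means no induced subgraph isomorphic to $S_{t,t}$. $N(v)$ is the neighbourhood of $v$, $\delta(G)$ the minimum degree. For vertex sets $X,Y$ and $\epsilon\in(0,1)$, $S_X^Y(\epsilon)=\{x\in X : |N(x)\cap Y|\leq (1-\epsilon)|Y|\}$. *)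

theory Defs
  imports Complex_Main
begin

definition graph :: "'a set \<Rightarrow> ('a \<Rightarrow> 'a \<Rightarrow> bool) \<Rightarrow> bool" where
  "graph V E \<longleftrightarrow> finite V \<and> (\<forall>u v. E u v \<longrightarrow> u \<in> V \<and> v \<in> V)
     \<and> (\<forall>u v. E u v \<longrightarrow> E v u) \<and> (\<forall>v. \<not> E v v)"

definition nbhd :: "'a set \<Rightarrow> ('a \<Rightarrow> 'a \<Rightarrow> bool) \<Rightarrow> 'a \<Rightarrow> 'a set" where
  "nbhd V E v = {u \<in> V. E v u}"

definition min_degree_ge :: "'a set \<Rightarrow> ('a \<Rightarrow> 'a \<Rightarrow> bool) \<Rightarrow> real \<Rightarrow> bool" where
  "min_degree_ge V E c \<longleftrightarrow> (\<forall>v\<in>V. real (card (nbhd V E v)) \<ge> c)"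

definition bipartite :: "'a set \<Rightarrow> ('a \<Rightarrow> 'a \<Rightarrow> bool) \<Rightarrow> bool" where
  "bipartite V E \<longleftrightarrow> (\<exists>A B. A \<union> B = V \<and> A \<inter> B = {} \<and>
     (\<forall>u v. E u v \<longrightarrow> (u \<in> A \<and> v \<in> B) \<or> (u \<in> B \<and> v \<in> A)))"

text \<open>Induced copy of the biclaw S_{a,b}: distinct vertices x, x_1..x_a, y, y_1..y_b
whose induced edges are exactly xy, x y_j, y x_i.\<close>
definition induced_biclaw :: "'a set \<Rightarrow> ('a \<Rightarrow> 'a \<Rightarrow> bool) \<Rightarrow> nat \<Rightarrow> nat \<Rightarrow> bool" where
  "induced_biclaw V E a b \<longleftrightarrow> (\<exists>x y (xs :: nat \<Rightarrow> 'a) (ys :: nat \<Rightarrow> 'a).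
     x \<in> V \<and> y \<in> V \<and> xs ` {1..a} \<subseteq> V \<and> ys ` {1..b} \<subseteq> V \<and>
     inj_on xs {1..a} \<and> inj_on ys {1..b} \<and>
     x \<noteq> y \<and> x \<notin> xs ` {1..a} \<and> x \<notin> ys ` {1..b} \<and>
     y \<notin> xs ` {1..a} \<and> y \<notin> ys ` {1..b} \<and> xs ` {1..a} \<inter> ys ` {1..b} = {} \<and>
     E x y \<and> (\<forall>j\<in>{1..b}. E x (ys j)) \<and> (\<forall>i\<in>{1..a}. E y (xs i)) \<and>
     (\<forall>i\<in>{1..a}. \<not> E x (xs i)) \<and> (\<forall>j\<in>{1..b}. \<not> E y (ys j)) \<and>
     (\<forall>i\<in>{1..a}. \<forall>i'\<in>{1..a}. \<not> E (xs i) (xs i')) \<and>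
     (\<forall>j\<in>{1..b}. \<forall>j'\<in>{1..b}. \<not> E (ys j) (ys j')) \<and>
     (\<forall>i\<in>{1..a}. \<forall>j\<in>{1..b}. \<not> E (xs i) (ys j)))"

definition induced_biclaw_free :: "'a set \<Rightarrow> ('a \<Rightarrow> 'a \<Rightarrow> bool) \<Rightarrow> nat \<Rightarrow> bool" where
  "induced_biclaw_free V E t \<longleftrightarrow> \<not> induced_biclaw V E t t"

definition S_set :: "'a set \<Rightarrow> ('a \<Rightarrow> 'a \<Rightarrow> bool) \<Rightarrow> 'a set \<Rightarrow> 'a set \<Rightarrow> real \<Rightarrow> 'a set" where
  "S_set V E X Y \<epsilon> = {x \<in> X. real (card (nbhd V E x \<inter> Y)) \<le> (1 - \<epsilon>) * real (card Y)}"

end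

theory Submission
  imports Defs
begin

lemma tri_free:
  assumes "bipartite V E" "E a b" "E b c" "E a c" shows False
  using assms unfolding bipartite_def by blast

lemma inj_enum:
  assumes "finite P" "t \<le> card P"
  obtains f :: "nat \<Rightarrow> 'a" where "inj_on f {1..t}" "f ` {1..t} \<subseteq> P"
proof -
  obtain P0 where P0: "P0 \<subseteq> P" "card P0 = t" "finite P0"
    using obtain_subset_with_card_n assms(2) by metis
  then obtain h where "bij_betw h {1..card P0} P0" using ex_bij_betw_nat_finite_1 by metis
  then show ?thesis using that P0 unfolding bij_betw_def by auto
qed

lemma lemA:
  assumes g: "graph V E" and bp: "bipartite V E" and exy: "E x y"
   and P: "P \<subseteq> nbhd V E y" and Q: "Q \<subseteq> nbhd V E x" and xP: "x \<notin> P" and yQ: "y \<notin> Q"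
   and cP: "t \<le> card P" and cQ: "t \<le> card Q" and noe: "\<forall>p\<in>P. \<forall>q\<in>Q. \<not> E p q"
  shows "induced_biclaw V E t t"
proof -
  have fin: "finite V" and inV: "\<And>u v. E u v \<Longrightarrow> u \<in> V \<and> v \<in> V"
    and sym: "\<And>u v. E u v \<Longrightarrow> E v u" and irr: "\<And>v. \<not> E v v"
    using g unfolding graph_def by auto
  have tf: "\<And>a b c. E a b \<Longrightarrow> E b c \<Longrightarrow> E a c \<Longrightarrow> False" using tri_free bp by metis
  have PV: "P \<subseteq> V" and QV: "Q \<subseteq> V" and EP: "\<forall>p\<in>P. E y p" and EQ: "\<forall>q\<in>Q. E x q"
    using P Q unfolding nbhd_def by auto
  have fP: "finite P" and fQ: "finite Q" using PV QV fin finite_subset by auto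
  obtain xs where xs: "inj_on xs {1..t}" "xs ` {1..t} \<subseteq> P" using inj_enum[OF fP cP] by metis
  obtain ys where ys: "inj_on ys {1..t}" "ys ` {1..t} \<subseteq> Q" using inj_enum[OF fQ cQ] by metis
  have A: "\<forall>i\<in>{1..t}. xs i \<in> P" "\<forall>i\<in>{1..t}. ys i \<in> Q" using xs ys by auto
  have PQ: "P \<inter> Q = {}" using EP EQ exy tf by blast
  have nxP: "\<forall>p\<in>P. \<not> E x p" using EP exy tf sym by blast
  have nyQ: "\<forall>q\<in>Q. \<not> E y q" using EQ exy tf sym by blast
  have iP: "\<forall>p\<in>P. \<forall>p'\<in>P. \<not> E p p'" using EP tf by blast
  have iQ: "\<forall>p\<in>Q. \<forall>p'\<in>Q. \<not> E p p'" using EQ tf by blast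
  have yP: "y \<notin> P" and xQ: "x \<notin> Q" and xy: "x \<noteq> y" using EP EQ irr exy by auto
  have B1: "xs ` {1..t} \<inter> ys ` {1..t} = {}" using xs ys PQ by blast
  have B2: "x \<notin> xs ` {1..t}" "x \<notin> ys ` {1..t}" "y \<notin> xs ` {1..t}" "y \<notin> ys ` {1..t}"
    using xs ys xP yQ yP xQ by blast+
  show ?thesis unfolding induced_biclaw_def
    apply (rule exI[of _ x], rule exI[of _ y], rule exI[of _ xs], rule exI[of _ ys])
    apply (intro conjI)
    using inV[OF exy] apply blast
    using inV[OF exy] apply blast
    using xs PV apply blast
    using ys QV apply blast
    using xs apply blast
    using ys apply blast
    apply (rule xy)
    apply (rule B2(1))
    apply (rule B2(2))
    apply (rule B2(3))
    apply (rule B2(4))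
    apply (rule B1)
    apply (rule exy)
    using A EQ apply blast
    using A EP apply blast
    using A nxP apply blast
    using A nyQ apply blast
    using A iP apply blast
    using A iQ apply blast
    using A noe apply blast
    done
qed

lemma lemC:
  assumes g: "graph V E" and bp: "bipartite V E" and noe: "\<forall>p\<in>T. \<forall>q\<in>W. \<not> E p q"
    and exy: "E x y" and c1: "t \<le> card (nbhd V E y \<inter> T)" and c2: "t \<le> card (nbhd V E x \<inter> W)"
    and t0: "0 < t"
  shows "induced_biclaw V E t t"
proof (rule lemA[OF g bp exy, of "nbhd V E y \<inter> T" "nbhd V E x \<inter> W"])
  have sym: "\<And>u v. E u v \<Longrightarrow> E v u" using g unfolding graph_def by auto
  have ne1: "nbhd V E y \<inter> T \<noteq> {}" and ne2: "nbhd V E x \<inter> W \<noteq> {}" using c1 c2 t0 by auto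
  show "x \<notin> nbhd V E y \<inter> T" using ne2 noe unfolding nbhd_def by auto
  show "y \<notin> nbhd V E x \<inter> W" using ne1 noe sym unfolding nbhd_def by blast
qed (use c1 c2 noe in auto)

lemma lemB:
  assumes g: "graph V E" and bp: "bipartite V E" and free: "\<not> induced_biclaw V E t t"
    and t0: "0 < t" and eab: "E a b" and T: "T \<subseteq> nbhd V E a" and cT: "t^2+1 \<le> card T"
  shows "card (nbhd V E b) \<le> card {z \<in> nbhd V E b. t \<le> card (nbhd V E z \<inter> T)} + t"
proof -
  have fin: "finite V" using g unfolding graph_def by auto
  have fN: "\<And>v. finite (nbhd V E v)" using fin unfolding nbhd_def by auto
  have fT: "finite T" using T fN finite_subset by blast
  define Bad where "Bad = {z \<in> nbhd V E b. z \<noteq> a \<and> card (nbhd V E z \<inter> T) < t}"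
  have "card Bad < t"
  proof (rule ccontr)
    assume "\<not> card Bad < t"
    then obtain Z0 where Z0: "Z0 \<subseteq> Bad" "card Z0 = t" "finite Z0"
      using obtain_subset_with_card_n by (metis not_less)
    define U where "U = (\<Union>z\<in>Z0. nbhd V E z \<inter> T)"
    have "card U \<le> (\<Sum>z\<in>Z0. card (nbhd V E z \<inter> T))" unfolding U_def by (rule card_UN_le[OF Z0(3)])
    also have "\<dots> \<le> card Z0 * (t - 1)"
      using sum_bounded_above[of Z0 "\<lambda>z. card (nbhd V E z \<inter> T)" "t-1"] Z0(1) unfolding Bad_def
      by fastforce
    finally have cU: "card U \<le> t * (t - 1)" using Z0 by simp
    define Q where "Q = T - U - {b}"
    have "T \<subseteq> Q \<union> U \<union> {b}" unfolding Q_def by auto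
    hence "card T \<le> card (Q \<union> U \<union> {b})" using fT Q_def U_def
      by (intro card_mono) auto
    also have "\<dots> \<le> card (Q \<union> U) + card {b}" by (rule card_Un_le)
    also have "\<dots> \<le> card Q + card U + 1" using card_Un_le[of Q U] by simp
    finally have "card T \<le> card Q + card U + 1" .
    moreover have "t^2 = t*(t-1) + t" using t0 by (cases t) (auto simp: power2_eq_square)
    ultimately have cQ: "t \<le> card Q" using cT cU by linarith
    have "induced_biclaw V E t t"
    proof (rule lemA[OF g bp eab, of Z0 Q])
      show "Z0 \<subseteq> nbhd V E b" "a \<notin> Z0" using Z0 unfolding Bad_def by auto
      show "Q \<subseteq> nbhd V E a" "b \<notin> Q" using T unfolding Q_def by auto
      show "t \<le> card Z0" "t \<le> card Q" using Z0 cQ by auto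
      show "\<forall>p\<in>Z0. \<forall>q\<in>Q. \<not> E p q" using T unfolding Q_def U_def nbhd_def by auto
    qed
    with free show False by simp
  qed
  have "nbhd V E b \<subseteq> {z \<in> nbhd V E b. t \<le> card (nbhd V E z \<inter> T)} \<union> Bad \<union> {a}"
    unfolding Bad_def by auto
  hence "card (nbhd V E b) \<le> card ({z \<in> nbhd V E b. t \<le> card (nbhd V E z \<inter> T)} \<union> Bad \<union> {a})"
    using fN unfolding Bad_def by (intro card_mono) auto
  also have "\<dots> \<le> card ({z \<in> nbhd V E b. t \<le> card (nbhd V E z \<inter> T)} \<union> Bad) + card {a}" by (rule card_Un_le)
  also have "\<dots> \<le> card {z \<in> nbhd V E b. t \<le> card (nbhd V E z \<inter> T)} + card Bad + 1"
    using card_Un_le[of "{z \<in> nbhd V E b. t \<le> card (nbhd V E z \<inter> T)}" Bad] by simp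
  finally show ?thesis using \<open>card Bad < t\<close> by linarith
qed

lemma lemStep:
  assumes g: "graph V E" and bp: "bipartite V E" and free: "\<not> induced_biclaw V E t t"
    and t0: "0 < t" and eab: "E a b" and ecd: "E c d"
    and T: "T \<subseteq> nbhd V E a" and W: "W \<subseteq> nbhd V E c"
    and cT: "t^2+1 \<le> card T" and cW: "t^2+1 \<le> card W"
    and noe: "\<forall>p\<in>T. \<forall>q\<in>W. \<not> E p q"
    and db: "t^2+t+1 \<le> card (nbhd V E b)" and dd: "t^2+t+1 \<le> card (nbhd V E d)"
  shows "\<exists>T' W'. T' \<subseteq> nbhd V E b \<and> W' \<subseteq> nbhd V E d \<and> t^2+1 \<le> card T' \<and> t^2+1 \<le> card W'
     \<and> (\<forall>p\<in>T'. \<forall>q\<in>W'. \<not> E p q)"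
proof (intro exI conjI)
  let ?T' = "{z \<in> nbhd V E b. t \<le> card (nbhd V E z \<inter> T)}"
  let ?W' = "{z \<in> nbhd V E d. t \<le> card (nbhd V E z \<inter> W)}"
  show "?T' \<subseteq> nbhd V E b" "?W' \<subseteq> nbhd V E d" by auto
  show "t^2+1 \<le> card ?T'" using lemB[OF g bp free t0 eab T cT] db by linarith
  show "t^2+1 \<le> card ?W'" using lemB[OF g bp free t0 ecd W cW] dd by linarith
  have sym: "\<And>u v. E u v \<Longrightarrow> E v u" using g unfolding graph_def by auto
  show "\<forall>p\<in>?T'. \<forall>q\<in>?W'. \<not> E p q"
  proof (intro ballI notI)
    fix p q assume p: "p \<in> ?T'" and q: "q \<in> ?W'" and epq: "E p q"
    have "E q p" using epq by (rule sym)
    have "induced_biclaw V E t t"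
      by (rule lemC[OF g bp noe \<open>E q p\<close> _ _ t0]) (use p q in auto)
    with free show False by simp
  qed
qed

lemma dcount:
  assumes "finite A" "finite B"
  shows "(\<Sum>w\<in>A. card {u\<in>B. R u w}) = (\<Sum>u\<in>B. card {w\<in>A. R u w})"
proof -
  have "(\<Sum>w\<in>A. card {u\<in>B. R u w}) = (\<Sum>w\<in>A. \<Sum>u\<in>B. if R u w then 1 else 0)"
    using assms by (simp add: sum.inter_filter[symmetric])
  also have "\<dots> = (\<Sum>u\<in>B. \<Sum>w\<in>A. if R u w then 1 else 0)" by (rule sum.swap)
  also have "\<dots> = (\<Sum>u\<in>B. card {w\<in>A. R u w})"
    using assms by (simp add: sum.inter_filter[symmetric])
  finally show ?thesis .
qed

lemma lemE:
  fixes \<epsilon> :: real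
  assumes fY: "finite Y" and fS: "finite S" and YV: "Y \<subseteq> V"
    and Sp: "\<forall>u\<in>S. real (card (nbhd V E u \<inter> Y)) \<le> (1-\<epsilon>) * real (card Y)"
    and e0: "0 < \<epsilon>" and e1: "\<epsilon> < 1" and cY: "2 * real m / \<epsilon> \<le> real (card Y)" and km: "k \<le> m"
  shows "\<exists>W \<subseteq> Y. card W = k \<and> (\<epsilon>/2)^k * real (card S) \<le> real (card {u\<in>S. \<forall>w\<in>W. \<not> E u w})"
  using km
proof (induction k)
  case 0
  show ?case by (rule exI[of _ "{}"]) simp
next
  case (Suc k)
  then obtain W where W: "W \<subseteq> Y" "card W = k"
    and IH: "(\<epsilon>/2)^k * real (card S) \<le> real (card {u\<in>S. \<forall>w\<in>W. \<not> E u w})" by auto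
  define Sk where "Sk = {u\<in>S. \<forall>w\<in>W. \<not> E u w}"
  define A where "A = Y - W"
  have fW: "finite W" using W fY finite_subset by blast
  have fA: "finite A" using fY A_def by auto
  have fSk: "finite Sk" using fS Sk_def by auto
  have mY: "2 * real m \<le> \<epsilon> * real (card Y)" using cY e0 by (simp add: field_simps)
  have each: "\<epsilon> * real (card Y) / 2 \<le> real (card {w\<in>A. \<not> E u w})" if u: "u \<in> Sk" for u
  proof -
    have "Y \<subseteq> {w\<in>A. \<not> E u w} \<union> (nbhd V E u \<inter> Y) \<union> W"
      using YV unfolding A_def nbhd_def by auto
    hence "card Y \<le> card ({w\<in>A. \<not> E u w} \<union> (nbhd V E u \<inter> Y) \<union> W)"
      using fA fY fW by (intro card_mono) auto
    also have "\<dots> \<le> card ({w\<in>A. \<not> E u w} \<union> (nbhd V E u \<inter> Y)) + card W" by (rule card_Un_le)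
    also have "\<dots> \<le> card {w\<in>A. \<not> E u w} + card (nbhd V E u \<inter> Y) + card W"
      using card_Un_le[of "{w\<in>A. \<not> E u w}" "nbhd V E u \<inter> Y"] by simp
    finally have "real (card Y) \<le> real (card {w\<in>A. \<not> E u w}) + real (card (nbhd V E u \<inter> Y)) + real k"
      using W by linarith
    moreover have "real (card (nbhd V E u \<inter> Y)) \<le> (1-\<epsilon>) * real (card Y)" using Sp u Sk_def by auto
    moreover have "real k \<le> real m" using Suc by simp
    ultimately show ?thesis using mY by (simp add: algebra_simps)
  qed
  have sum1: "(\<Sum>w\<in>A. real (card {u\<in>Sk. \<not> E u w})) = (\<Sum>u\<in>Sk. real (card {w\<in>A. \<not> E u w}))"
  proof -
    have "real (\<Sum>w\<in>A. card {u\<in>Sk. \<not> E u w}) = real (\<Sum>u\<in>Sk. card {w\<in>A. \<not> E u w})"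
      using dcount[OF fA fSk, of "\<lambda>u w. \<not> E u w"] by simp
    thus ?thesis by simp
  qed
  have "(\<Sum>u\<in>Sk. \<epsilon> * real (card Y) / 2) \<le> (\<Sum>u\<in>Sk. real (card {w\<in>A. \<not> E u w}))"
    using each by (rule sum_mono)
  hence sum2: "real (card Sk) * (\<epsilon> * real (card Y) / 2) \<le> (\<Sum>w\<in>A. real (card {u\<in>Sk. \<not> E u w}))"
    using sum1 by simp
  have "real (card Y) - real k \<le> real (card A)"
    using card_Diff_subset[OF fW W(1)] W A_def card_mono[OF fY W(1)] by simp
  moreover have "real k < real (card Y)"
  proof -
    have "real k < real m" using Suc by simp
    also have "real m \<le> 2 * real m" by simp
    also have "\<dots> \<le> \<epsilon> * real (card Y)" by (rule mY)
    also have "\<dots> \<le> 1 * real (card Y)" using e1 by (intro mult_right_mono) auto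
    finally show ?thesis by simp
  qed
  ultimately have cA: "0 < card A" by linarith
  have cAY: "card A \<le> card Y" unfolding A_def using fY by (simp add: card_mono)
  have "\<exists>w\<in>A. real (card Sk) * (\<epsilon> / 2) \<le> real (card {u\<in>Sk. \<not> E u w})"
  proof (rule ccontr)
    assume "\<not> (\<exists>w\<in>A. real (card Sk) * (\<epsilon> / 2) \<le> real (card {u\<in>Sk. \<not> E u w}))"
    hence lt: "\<And>w. w \<in> A \<Longrightarrow> real (card {u\<in>Sk. \<not> E u w}) < real (card Sk) * (\<epsilon> / 2)"
      by (simp add: not_le)
    have "(\<Sum>w\<in>A. real (card {u\<in>Sk. \<not> E u w})) < real (card A) * (real (card Sk) * (\<epsilon> / 2))"
      using sum_bounded_above_strict[of A "\<lambda>w. real (card {u\<in>Sk. \<not> E u w})", OF lt cA] by simp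
    also have "\<dots> \<le> real (card Y) * (real (card Sk) * (\<epsilon> / 2))"
      using cAY e0 by (intro mult_right_mono) auto
    finally show False using sum2 by (simp add: algebra_simps)
  qed
  then obtain w where w: "w \<in> A" "real (card Sk) * (\<epsilon> / 2) \<le> real (card {u\<in>Sk. \<not> E u w})" by blast
  have wW: "w \<notin> W" "w \<in> Y" using w A_def by auto
  show ?case
  proof (intro exI conjI)
    show "insert w W \<subseteq> Y" using wW W by auto
    show "card (insert w W) = Suc k" using wW W fW by simp
    have eq: "{u\<in>S. \<forall>w'\<in>insert w W. \<not> E u w'} = {u\<in>Sk. \<not> E u w}" unfolding Sk_def by auto
    have "(\<epsilon>/2)^Suc k * real (card S) = (\<epsilon>/2) * ((\<epsilon>/2)^k * real (card S))" by simp
    also have "\<dots> \<le> (\<epsilon>/2) * real (card Sk)" using IH Sk_def e0 by (intro mult_left_mono) auto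
    also have "\<dots> \<le> real (card {u\<in>Sk. \<not> E u w})" using w by (simp add: algebra_simps)
    finally show "(\<epsilon>/2)^Suc k * real (card S) \<le> real (card {u\<in>S. \<forall>w'\<in>insert w W. \<not> E u w'})"
      using eq by simp
  qed
qed

theorem mainTheorem7:
  "\<exists>C :: nat \<Rightarrow> real \<Rightarrow> real. \<forall>t::nat. \<forall>\<epsilon>::real. \<forall>(V::nat set) E.
     0 < t \<longrightarrow> 0 < \<epsilon> \<longrightarrow> \<epsilon> < 1 \<longrightarrow>
     graph V E \<longrightarrow> bipartite V E \<longrightarrow> min_degree_ge V E (C t \<epsilon>) \<longrightarrow>
     induced_biclaw_free V E t \<longrightarrow>
     (\<forall>x1 x2 x3 x4 x5 x6. distinct [x1, x2, x3, x4, x5, x6] \<longrightarrow>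
        E x1 x2 \<longrightarrow> E x2 x3 \<longrightarrow> E x3 x4 \<longrightarrow> E x4 x5 \<longrightarrow> E x5 x6 \<longrightarrow>
        real (card (S_set V E (nbhd V E x1) (nbhd V E x6) \<epsilon>)) \<le> C t \<epsilon>)"
proof (rule exI[of _ "\<lambda>t \<epsilon>. real (t^2+1) * (2/\<epsilon>)^(t^2+1) + 2 * real (t^2+1) / \<epsilon> + real (t^2+t+1)"],
       intro allI impI)
  fix t :: nat and \<epsilon> :: real and V :: "nat set" and E x1 x2 x3 x4 x5 x6
  define m where "m = t^2+1"
  define C where "C = real m * (2/\<epsilon>)^m + 2 * real m / \<epsilon> + real (t^2+t+1)"
  assume t0: "0 < t" and e0: "0 < \<epsilon>" and e1: "\<epsilon> < 1" and g: "graph V E" and bp: "bipartite V E"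
    and md: "min_degree_ge V E (real (t^2+1) * (2/\<epsilon>)^(t^2+1) + 2 * real (t^2+1) / \<epsilon> + real (t^2+t+1))"
    and fr: "induced_biclaw_free V E t" and "distinct [x1, x2, x3, x4, x5, x6]"
    and e12: "E x1 x2" and e23: "E x2 x3" and e34: "E x3 x4" and e45: "E x4 x5" and e56: "E x5 x6"
  have free: "\<not> induced_biclaw V E t t" using fr unfolding induced_biclaw_free_def .
  have fin: "finite V" and inV: "\<And>u v. E u v \<Longrightarrow> u \<in> V \<and> v \<in> V"
    and sym: "\<And>u v. E u v \<Longrightarrow> E v u"
    using g unfolding graph_def by auto
  have fN: "\<And>v. finite (nbhd V E v)" using fin unfolding nbhd_def by auto
  have deg: "\<And>v. v \<in> V \<Longrightarrow> C \<le> real (card (nbhd V E v))"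
    using md unfolding min_degree_ge_def C_def m_def by auto
  have p1: "0 \<le> real m * (2/\<epsilon>)^m" using e0 by simp
  have p2: "0 \<le> 2 * real m / \<epsilon>" using e0 by simp
  have deg1: "t^2+t+1 \<le> card (nbhd V E v)" if "v \<in> V" for v
  proof -
    have "real (t^2+t+1) \<le> real (card (nbhd V E v))" using deg[OF that] p1 p2 unfolding C_def by linarith
    thus ?thesis by linarith
  qed
  have deg2: "2 * real m / \<epsilon> \<le> real (card (nbhd V E v))" if "v \<in> V" for v
    using deg[OF that] p1 unfolding C_def by linarith
  have V1: "x1 \<in> V" "x2 \<in> V" "x3 \<in> V" "x4 \<in> V" "x5 \<in> V" "x6 \<in> V"
    using inV e12 e23 e34 e45 e56 by auto
  define S where "S = S_set V E (nbhd V E x1) (nbhd V E x6) \<epsilon>"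
  have main: "real (card S) \<le> C"
  proof (rule ccontr)
    assume "\<not> real (card S) \<le> C"
    hence cS: "C < real (card S)" by simp
    have SX: "S \<subseteq> nbhd V E x1" unfolding S_def S_set_def by auto
    have fS: "finite S" using SX fN finite_subset by blast
    have Sp: "\<forall>u\<in>S. real (card (nbhd V E u \<inter> nbhd V E x6)) \<le> (1-\<epsilon>) * real (card (nbhd V E x6))"
      unfolding S_def S_set_def by auto
    have YV: "nbhd V E x6 \<subseteq> V" unfolding nbhd_def by auto
    obtain W where W: "W \<subseteq> nbhd V E x6" "card W = m"
      and cT: "(\<epsilon>/2)^m * real (card S) \<le> real (card {u\<in>S. \<forall>w\<in>W. \<not> E u w})"
      using lemE[OF fN fS YV Sp e0 e1 deg2[OF V1(6)], of m] by auto
    define T where "T = {u\<in>S. \<forall>w\<in>W. \<not> E u w}"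
    have "real m = (\<epsilon>/2)^m * (real m * (2/\<epsilon>)^m)"
    proof -
      have "(\<epsilon>/2)^m * (2/\<epsilon>)^m = ((\<epsilon>/2) * (2/\<epsilon>))^m" by (rule power_mult_distrib[symmetric])
      also have "\<dots> = 1"
      proof -
        have q: "(\<epsilon>/2)*(2/\<epsilon>) = 1" using e0 by simp
        show ?thesis by (simp only: q power_one)
      qed
      finally have h: "(\<epsilon>/2)^m * (2/\<epsilon>)^m = 1" .
      have "(\<epsilon>/2)^m * (real m * (2/\<epsilon>)^m) = real m * ((\<epsilon>/2)^m * (2/\<epsilon>)^m)"
        by (rule mult.left_commute)
      thus ?thesis using h by simp
    qed
    also have "\<dots> \<le> (\<epsilon>/2)^m * real (card S)"
    proof -
      have "real m * (2/\<epsilon>)^m \<le> real (card S)"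
        using cS p2 of_nat_0_le_iff[of "t^2+t+1"] unfolding C_def by linarith
      thus ?thesis using e0 by (intro mult_left_mono) auto
    qed
    finally have "real m \<le> real (card T)" using cT T_def by simp
    hence cT': "t^2+1 \<le> card T" unfolding m_def by linarith
    have TX: "T \<subseteq> nbhd V E x1" using SX T_def by auto
    have noe: "\<forall>p\<in>T. \<forall>q\<in>W. \<not> E p q" unfolding T_def by auto
    have cW: "t^2+1 \<le> card W" using W m_def by simp
    obtain T2 W5 where s1: "T2 \<subseteq> nbhd V E x2" "W5 \<subseteq> nbhd V E x5" "t^2+1 \<le> card T2" "t^2+1 \<le> card W5"
      "\<forall>p\<in>T2. \<forall>q\<in>W5. \<not> E p q"
      using lemStep[OF g bp free t0 e12 sym[OF e56] TX W(1) cT' cW noe deg1[OF V1(2)] deg1[OF V1(5)]]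
      by blast
    obtain T3 W4 where s2: "T3 \<subseteq> nbhd V E x3" "W4 \<subseteq> nbhd V E x4" "t^2+1 \<le> card T3" "t^2+1 \<le> card W4"
      "\<forall>p\<in>T3. \<forall>q\<in>W4. \<not> E p q"
      using lemStep[OF g bp free t0 e23 sym[OF e45] s1(1) s1(2) s1(3) s1(4) s1(5) deg1[OF V1(3)] deg1[OF V1(4)]]
      by blast
    have tt: "t \<le> t^2+1" using t0 by (simp add: power2_eq_square) (metis le_SucI le_square)
    have i1: "nbhd V E x3 \<inter> T3 = T3" and i2: "nbhd V E x4 \<inter> W4 = W4" using s2 by auto
    have "induced_biclaw V E t t"
      by (rule lemC[OF g bp s2(5) sym[OF e34] _ _ t0]) (use i1 i2 s2 tt in auto)
    with free show False by simp
  qed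
  thus "real (card (S_set V E (nbhd V E x1) (nbhd V E x6) \<epsilon>))
        \<le> real (t^2+1) * (2/\<epsilon>)^(t^2+1) + 2 * real (t^2+1) / \<epsilon> + real (t^2+t+1)"
    unfolding S_def C_def m_def .
qed

end
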